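(* For each $\beta>0$ there exists a radial weight $\nu\in\widehat{\mathcal{D}}$ such that $\nu_{[\beta]}\notin\widehat{\mathcal{D}}$, where $\nu_{[\beta]}(z)=\nu(z)(1-|z|)^\beta$.
   Context: A radial weight is a non-negative $\omega\in L^1([0,1))$, extended to the unit disc by $\omega(z)=\omega(|z|)$, with $\widehat{\omega}(r)=\int_r^1\omega(s)\,ds>0$ for all $0\le r<1$. A radial weight $\nu$ belongs to $\widehat{\mathcal{D}}$ if there is $C\ge1$ with $\widehat{\nu}(r)\le C\,\widehat{\nu}\big(\frac{1+r}{2}\big)$ for all $0\le r<1$. *)

theory Defs
  imports "HOL-Analysis.Analysis"
begin

text \<open>A radial weight is represented by its profile on [0,1); values outside [0,1)
are irrelevant. omega_hat r = integral of omega over [r,1).\<close>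

definition omega_hat :: "(real \<Rightarrow> real) \<Rightarrow> real \<Rightarrow> real" where
  "omega_hat \<omega> r = (LINT s:{r..<1}|lborel. \<omega> s)"

definition radial_weight :: "(real \<Rightarrow> real) \<Rightarrow> bool" where
  "radial_weight \<omega> \<longleftrightarrow>
     (\<forall>r\<in>{0..<1}. 0 \<le> \<omega> r) \<and>
     set_integrable lborel {0..<1} \<omega> \<and>
     (\<forall>r\<in>{0..<1}. omega_hat \<omega> r > 0)"

definition D_hat :: "(real \<Rightarrow> real) set" where
  "D_hat = {\<nu>. radial_weight \<nu> \<and>
     (\<exists>C\<ge>1. \<forall>r\<in>{0..<1}. omega_hat \<nu> r \<le> C * omega_hat \<nu> ((1 + r) / 2))}"

definition weight_power :: "(real \<Rightarrow> real) \<Rightarrow> real \<Rightarrow> real \<Rightarrow> real" where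
  "weight_power \<nu> \<beta> r = \<nu> r * (1 - r) powr \<beta>"

end

theory Submission
  imports Defs "HOL-Real_Asymp.Real_Asymp"
begin

definition psi :: "real \<Rightarrow> real" where "psi s = 1 / ((1 - s) * (ln (1 - s))^2)"
definition G :: "real \<Rightarrow> real" where "G s = 1 / ln (1 - s)"

lemma G_deriv: assumes "0 < s" "s < 1" shows "DERIV G s :> psi s"
proof -
  have l: "ln (1 - s) \<noteq> 0" using assms by simp
  have "DERIV (\<lambda>s. 1 / ln (1 - s)) s :> 1 / ((1 - s) * (ln (1 - s))^2)"
    using assms l by (auto intro!: derivative_eq_intros simp: field_split_simps power2_eq_square)
  then show ?thesis unfolding G_def psi_def .
qed

lemma psi_cont: assumes "0 < s" "s < 1" shows "isCont psi s"
  using assms unfolding psi_def by (auto intro!: continuous_intros)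

lemma psi_nonneg: "s < 1 \<Longrightarrow> 0 \<le> psi s"
  unfolding psi_def by simp

lemma FTC_fin: assumes "0 < a" "a < b" "b < 1"
  shows "set_integrable lborel {a<..<b} psi" "(LINT x:{a<..<b}|lborel. psi x) = G b - G a"
proof -
  have c: "isCont G x" if "0 < x" "x < 1" for x
    using G_deriv[OF that] DERIV_isCont by blast
  have A: "((G \<circ> real_of_ereal) \<longlongrightarrow> G a) (at_right (ereal a))"
    unfolding at_right_ereal filterlim_filtermap o_def
    using c[of a] assms by (simp add: isCont_def filterlim_at_split)
  have B: "((G \<circ> real_of_ereal) \<longlongrightarrow> G b) (at_left (ereal b))"
    unfolding at_left_ereal filterlim_filtermap o_def
    using c[of b] assms by (simp add: isCont_def filterlim_at_split)
  note r = interval_integral_FTC_nonneg[of "ereal a" "ereal b" G psi, OF _ _ _ _ A B]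
  have h: "set_integrable lborel (einterval (ereal a) (ereal b)) psi \<and> (LBINT x=ereal a..ereal b. psi x) = G b - G a"
    using assms by (intro conjI r) (auto intro!: G_deriv psi_cont psi_nonneg)
  then show "set_integrable lborel {a<..<b} psi" by simp
  from h show "(LINT x:{a<..<b}|lborel. psi x) = G b - G a"
    using assms by (simp add: interval_lebesgue_integral_def)
qed

lemma FTC_inf: assumes "0 < a" "a < 1"
  shows "set_integrable lborel {a<..<1} psi" "(LINT x:{a<..<1}|lborel. psi x) = - G a"
proof -
  have c: "isCont G x" if "0 < x" "x < 1" for x
    using G_deriv[OF that] DERIV_isCont by blast
  have A: "((G \<circ> real_of_ereal) \<longlongrightarrow> G a) (at_right (ereal a))"
    unfolding at_right_ereal filterlim_filtermap o_def
    using c[of a] assms by (simp add: isCont_def filterlim_at_split)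
  have lim: "((\<lambda>x. 1 / ln (1 - x)) \<longlongrightarrow> 0) (at_left (1::real))" by real_asymp
  have B: "((G \<circ> real_of_ereal) \<longlongrightarrow> 0) (at_left (ereal 1))"
    unfolding at_left_ereal filterlim_filtermap o_def G_def
    using lim by simp
  note r = interval_integral_FTC_nonneg[of "ereal a" "ereal 1" G psi, OF _ _ _ _ A B]
  have h: "set_integrable lborel (einterval (ereal a) (ereal 1)) psi \<and> (LBINT x=ereal a..ereal 1. psi x) = 0 - G a"
    using assms by (intro conjI r) (auto intro!: G_deriv psi_cont psi_nonneg)
  then show "set_integrable lborel {a<..<1} psi" by simp
  from h show "(LINT x:{a<..<1}|lborel. psi x) = - G a"
    using assms by (simp add: interval_lebesgue_integral_def)
qed


definition blk :: "nat \<Rightarrow> real set" where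
  "blk j = {1 - exp (-((4::real)^j)) ..< 1 - exp (-(2*(4::real)^j))}"
definition AA :: "real set" where "AA = (\<Union>j. blk j)"
definition nu :: "real \<Rightarrow> real" where "nu s = (if s \<in> AA then psi s else 0)"

lemma AA_bounds: assumes "s \<in> AA" shows "1 - exp (-1) \<le> s" "s < 1"
proof -
  obtain j where j: "s \<in> blk j" using assms unfolding AA_def by blast
  have "(1::real) \<le> 4^j" by simp
  then have "exp (-((4::real)^j)) \<le> exp (-1)" by simp
  moreover have "1 - exp (-((4::real)^j)) \<le> s" using j unfolding blk_def by auto
  ultimately show "1 - exp (-1) \<le> s" by linarith
  have "0 < exp (-(2*(4::real)^j))" by simp
  moreover have "s < 1 - exp (-(2*(4::real)^j))" using j unfolding blk_def by auto
  ultimately show "s < 1" by linarith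
qed

lemma nu_nonneg: "0 \<le> nu s"
  unfolding nu_def using AA_bounds psi_nonneg by auto

lemma AA_meas: "AA \<in> sets lborel"
  unfolding AA_def blk_def by (intro sets.countable_UN) auto

lemma psi_meas: "psi \<in> borel_measurable lborel"
  unfolding psi_def by measurable

lemma nu_meas: "nu \<in> borel_measurable lborel"
  unfolding nu_def using AA_meas psi_meas
  by (intro measurable_If_set) auto

lemma nu_integrable: "integrable lborel nu"
proof -
  define s0 :: real where "s0 = 1 - exp (-1)"
  have s0: "0 < s0" "s0 < 1" unfolding s0_def by auto
  have i: "integrable lborel (\<lambda>x. indicator {s0<..<1} x *\<^sub>R psi x)"
    using FTC_inf(1)[OF s0] unfolding set_integrable_def .
  show ?thesis
  proof (rule Bochner_Integration.integrable_bound[OF i nu_meas])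
    show "AE x in lborel. norm (nu x) \<le> norm (indicator {s0<..<1} x *\<^sub>R psi x)"
      using AE_lborel_singleton[of s0]
    proof eventually_elim
      case (elim x)
      show ?case
      proof (cases "x \<in> AA")
        case True
        then have "s0 < x" "x < 1" using AA_bounds[OF True] elim unfolding s0_def by auto
        then show ?thesis using True by (simp add: nu_def)
      next
        case False then show ?thesis by (simp add: nu_def)
      qed
    qed
  qed
qed

lemma nuw_integrable:
  assumes "w \<in> borel_measurable lborel" "\<forall>x\<in>AA. 0 \<le> w x \<and> w x \<le> 1" "S \<in> sets lborel"
  shows "integrable lborel (\<lambda>x. indicator S x *\<^sub>R (nu x * w x))"
proof -
  have "integrable lborel (\<lambda>x. nu x * w x)"
  proof (rule Bochner_Integration.integrable_bound[OF nu_integrable])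
    show "(\<lambda>x. nu x * w x) \<in> borel_measurable lborel" using nu_meas assms(1) by measurable
    show "AE x in lborel. norm (nu x * w x) \<le> norm (nu x)"
    proof (intro AE_I2)
      fix x show "norm (nu x * w x) \<le> norm (nu x)"
        using assms(2) nu_nonneg[of x] by (cases "x \<in> AA") (auto simp: nu_def abs_mult intro: mult_left_le)
    qed
  qed
  then show ?thesis using assms(3) by (rule integrable_mult_indicator[rotated])
qed

lemma LB:
  assumes "0 < p" "p < q" "q < 1" "{p<..<q} \<subseteq> AA" "r \<le> p" "0 \<le> c"
    "\<forall>x\<in>{p<..<q}. c \<le> w x" "\<forall>x\<in>AA. 0 \<le> w x \<and> w x \<le> 1" "w \<in> borel_measurable lborel"
  shows "c * (G q - G p) \<le> (LINT x:{r..<1}|lborel. nu x * w x)"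
proof -
  have i1: "integrable lborel (\<lambda>x. indicator {p<..<q} x *\<^sub>R psi x)"
    using FTC_fin(1)[OF assms(1-3)] unfolding set_integrable_def .
  have e1: "integral\<^sup>L lborel (\<lambda>x. indicator {p<..<q} x *\<^sub>R psi x) = G q - G p"
    using FTC_fin(2)[OF assms(1-3)] unfolding set_lebesgue_integral_def .
  have "c * (G q - G p) = integral\<^sup>L lborel (\<lambda>x. c * (indicator {p<..<q} x *\<^sub>R psi x))"
    using e1 by simp
  also have "\<dots> \<le> integral\<^sup>L lborel (\<lambda>x. indicator {r..<1} x *\<^sub>R (nu x * w x))"
  proof (rule integral_mono)
    show "integrable lborel (\<lambda>x. c * (indicator {p<..<q} x *\<^sub>R psi x))" using i1 by simp
    show "integrable lborel (\<lambda>x. indicator {r..<1} x *\<^sub>R (nu x * w x))"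
      using nuw_integrable assms(8,9) by simp
    fix x
    show "c * (indicator {p<..<q} x *\<^sub>R psi x) \<le> indicator {r..<1} x *\<^sub>R (nu x * w x)"
    proof (cases "x \<in> {p<..<q}")
      case True
      then have xa: "x \<in> AA" using assms(4) by auto
      have "x \<in> {r..<1}" using True assms by auto
      moreover have "c \<le> w x" using True assms(7) by auto
      moreover have "0 \<le> psi x" using psi_nonneg[of x] True assms(3) by auto
      ultimately have "c * psi x \<le> psi x * w x"
        by (metis mult.commute mult_left_mono)
      moreover have "x \<in> {r..<1}" using True assms by auto
      ultimately show ?thesis using True xa by (simp add: nu_def)
    next
      case False
      have "0 \<le> nu x * w x" using nu_nonneg[of x] assms(8) by (cases "x \<in> AA") (auto simp: nu_def)
      then show ?thesis using False by (auto simp: indicator_def)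
    qed
  qed
  finally show ?thesis unfolding set_lebesgue_integral_def .
qed

lemma UB:
  assumes "0 < a" "a < 1" "\<forall>x. x \<in> AA \<and> r \<le> x \<and> x < 1 \<longrightarrow> a \<le> x \<and> w x \<le> c" "0 \<le> c"
    "\<forall>x\<in>AA. 0 \<le> w x \<and> w x \<le> 1" "w \<in> borel_measurable lborel"
  shows "(LINT x:{r..<1}|lborel. nu x * w x) \<le> c * (- G a)"
proof -
  have i1: "integrable lborel (\<lambda>x. indicator {a<..<1} x *\<^sub>R psi x)"
    using FTC_inf(1)[OF assms(1-2)] unfolding set_integrable_def .
  have e1: "integral\<^sup>L lborel (\<lambda>x. indicator {a<..<1} x *\<^sub>R psi x) = - G a"
    using FTC_inf(2)[OF assms(1-2)] unfolding set_lebesgue_integral_def .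
  have "integral\<^sup>L lborel (\<lambda>x. indicator {r..<1} x *\<^sub>R (nu x * w x))
     \<le> integral\<^sup>L lborel (\<lambda>x. c * (indicator {a<..<1} x *\<^sub>R psi x))"
  proof (rule integral_mono_AE)
    show "integrable lborel (\<lambda>x. c * (indicator {a<..<1} x *\<^sub>R psi x))" using i1 by simp
    show "integrable lborel (\<lambda>x. indicator {r..<1} x *\<^sub>R (nu x * w x))"
      using nuw_integrable assms(5,6) by simp
    show "AE x in lborel. indicator {r..<1} x *\<^sub>R (nu x * w x) \<le> c * (indicator {a<..<1} x *\<^sub>R psi x)"
      using AE_lborel_singleton[of a]
    proof eventually_elim
      case (elim x)
      have rhs: "0 \<le> c * (indicator {a<..<1} x *\<^sub>R psi x)"
        using assms(4) psi_nonneg[of x] by (simp add: indicator_def)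
      show ?case
      proof (cases "x \<in> AA \<and> x \<in> {r..<1}")
        case True
        then have "a < x" "x < 1" "w x \<le> c" using assms(3) elim by force+
        moreover have "psi x * w x \<le> psi x * c" using psi_nonneg[of x] \<open>x < 1\<close> \<open>w x \<le> c\<close>
          by (simp add: mult_left_mono)
        ultimately show ?thesis using True by (simp add: nu_def mult.commute)
      next
        case False
        then show ?thesis using rhs by (auto simp: nu_def indicator_def)
      qed
    qed
  qed
  then show ?thesis unfolding set_lebesgue_integral_def using e1 by simp
qed

lemma G_exp: "0 < y \<Longrightarrow> G (1 - exp (-y)) = - 1 / y"
  unfolding G_def by simp

lemma blk_sub: "{1 - exp (-((4::real)^j)) <..< 1 - exp (-(2*(4::real)^j))} \<subseteq> AA"
proof
  fix x assume "x \<in> {1 - exp (-((4::real)^j)) <..< 1 - exp (-(2*(4::real)^j))}"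
  then show "x \<in> AA" unfolding AA_def blk_def by (intro UN_I[of j]) auto
qed

lemma exp_m1: "exp (-1::real) \<le> 1/2"
proof -
  have "2 \<le> exp (1::real)" using exp_ge_add_one_self[of 1] by simp
  then show ?thesis by (simp add: exp_minus field_simps)
qed

lemma key_lower:
  assumes "0 \<le> r" "r < 1"
  shows "\<exists>j. (1+r)/2 \<le> 1 - exp (-((4::real)^j)) \<and> (4::real)^j \<le> 8 * max (-ln(1-r)) 1"
proof -
  define X where "X = max (-ln(1-r)) 1"
  obtain n where "X + 1 < (4::real)^n" using real_arch_pow[of 4 "X+1"] by auto
  then have "\<exists>n. X + 1 \<le> (4::real)^n" by (auto intro: less_imp_le)
  then obtain j where j: "X + 1 \<le> (4::real)^j" "\<forall>m<j. \<not> X + 1 \<le> (4::real)^m"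
    using exists_least_iff[of "\<lambda>n. X + 1 \<le> (4::real)^n"] by blast
  have X1: "1 \<le> X" unfolding X_def by simp
  have "(4::real)^j \<le> 8 * X"
  proof (cases j)
    case 0 then show ?thesis using X1 by simp
  next
    case (Suc i)
    then have "(4::real)^i < X + 1" using j(2) by auto
    then show ?thesis using Suc X1 by simp
  qed
  moreover have "(1+r)/2 \<le> 1 - exp (-((4::real)^j))"
  proof -
    have "-ln(1-r) + 1 \<le> (4::real)^j" using j(1) unfolding X_def by linarith
    then have "exp (-((4::real)^j)) \<le> exp (ln (1-r) - 1)" by simp
    also have "\<dots> = (1 - r) * exp (-1)" using assms by (simp add: exp_diff exp_minus field_simps)
    also have "\<dots> \<le> (1 - r) * (1/2)" using exp_m1 assms by (intro mult_left_mono) auto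
    finally show ?thesis by simp
  qed
  ultimately show ?thesis unfolding X_def by blast
qed

lemma nuhat_lower:
  assumes "0 \<le> r" "r < 1"
  shows "\<exists>j. 1 / (2 * (4::real)^j) \<le> omega_hat nu ((1+r)/2) \<and> 1 / (2 * (4::real)^j) \<le> omega_hat nu r
     \<and> (4::real)^j \<le> 8 * max (-ln(1-r)) 1"
proof -
  obtain j where j: "(1+r)/2 \<le> 1 - exp (-((4::real)^j))" "(4::real)^j \<le> 8 * max (-ln(1-r)) 1"
    using key_lower[OF assms] by blast
  define p where "p = 1 - exp (-((4::real)^j))"
  define q where "q = 1 - exp (-(2*(4::real)^j))"
  have a4: "(1::real) \<le> 4^j" by simp
  have pq: "0 < p" "p < q" "q < 1" unfolding p_def q_def using a4 by auto
  have Gd: "G q - G p = 1 / (2 * (4::real)^j)"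
    unfolding p_def q_def using a4 by (simp add: G_exp field_simps)
  have L: "1 / (2 * (4::real)^j) \<le> omega_hat nu r'" if "r' \<le> p" for r'
  proof -
    have "1 * (G q - G p) \<le> (LINT x:{r'..<1}|lborel. nu x * 1)"
      by (rule LB[OF pq _ that]) (auto simp: p_def q_def blk_sub)
    then show ?thesis using Gd by (simp add: omega_hat_def)
  qed
  have "r \<le> (1+r)/2" using assms by simp
  then show ?thesis using L j unfolding p_def by (meson order_trans)
qed

lemma nu_D: "radial_weight nu \<and> nu \<in> D_hat"
proof -
  have rw: "radial_weight nu"
    unfolding radial_weight_def
  proof (intro conjI ballI)
    fix r :: real assume "r \<in> {0..<1}"
    then obtain j where "1 / (2 * (4::real)^j) \<le> omega_hat nu r" using nuhat_lower by auto
    moreover have "0 < 1 / (2 * (4::real)^j)" by simp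
    ultimately show "0 < omega_hat nu r" by linarith
  next
    fix r :: real show "0 \<le> nu r" by (rule nu_nonneg)
  next
    show "set_integrable lborel {0..<1} nu"
      unfolding set_integrable_def using integrable_mult_indicator[OF _ nu_integrable, of "{0..<1}"] by simp
  qed
  have "\<forall>r\<in>{0..<1}. omega_hat nu r \<le> 16 * omega_hat nu ((1 + r) / 2)"
  proof
    fix r :: real assume r: "r \<in> {0..<1}"
    define X where "X = max (-ln(1-r)) 1"
    obtain j where j: "1 / (2 * (4::real)^j) \<le> omega_hat nu ((1+r)/2)" "(4::real)^j \<le> 8 * X"
      using nuhat_lower r unfolding X_def by auto
    define s0 :: real where "s0 = 1 - exp (-1)"
    define a where "a = max r s0"
    have s0p: "0 < s0" "s0 < 1" unfolding s0_def by auto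
    have a: "0 < a" "a < 1" unfolding a_def using r s0p by auto
    have "(LINT x:{r..<1}|lborel. nu x * 1) \<le> 1 * (- G a)"
      by (rule UB[OF a]) (auto simp: a_def s0_def dest: AA_bounds)
    then have up: "omega_hat nu r \<le> - G a" by (simp add: omega_hat_def)
    have GX: "- G a = 1 / X"
    proof (cases "r \<le> s0")
      case True
      then have "a = s0" unfolding a_def by simp
      moreover have "exp (-1) \<le> 1 - r" using True unfolding s0_def by simp
      then have "-1 \<le> ln (1 - r)" using r by (metis exp_le_cancel_iff exp_ln diff_gt_0_iff_gt atLeastLessThan_iff)
      then have "X = 1" unfolding X_def by simp
      ultimately show ?thesis unfolding G_def s0_def by simp
    next
      case False
      then have "a = r" unfolding a_def by simp
      moreover have "1 - r < exp (-1)" using False unfolding s0_def by simp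
      then have "ln (1 - r) < -1" using r by (metis exp_less_cancel_iff exp_ln diff_gt_0_iff_gt atLeastLessThan_iff)
      then have "X = - ln (1 - r)" unfolding X_def by simp
      ultimately show ?thesis unfolding G_def by (simp add: divide_simps)
    qed
    have X1: "1 \<le> X" unfolding X_def by simp
    have "1 / X \<le> 16 * (1 / (2 * (4::real)^j))"
      using j(2) X1 by (simp add: field_simps)
    also have "\<dots> \<le> 16 * omega_hat nu ((1+r)/2)" using j(1) by simp
    finally show "omega_hat nu r \<le> 16 * omega_hat nu ((1 + r) / 2)" using up GX by simp
  qed
  then show ?thesis using rw unfolding D_hat_def by (intro conjI CollectI) (auto intro!: exI[of _ 16])
qed

lemma W_notin:
  fixes \<beta> :: real
  assumes b: "0 < \<beta>"
  shows "weight_power nu \<beta> \<notin> D_hat"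
proof
  assume "weight_power nu \<beta> \<in> D_hat"
  then obtain C where C: "C \<ge> 1"
    "\<forall>r\<in>{0..<1}. omega_hat (weight_power nu \<beta>) r \<le> C * omega_hat (weight_power nu \<beta>) ((1+r)/2)"
    unfolding D_hat_def by auto
  define w where "w = (\<lambda>x::real. (1 - x) powr \<beta>)"
  have wm: "w \<in> borel_measurable lborel" unfolding w_def by measurable
  have wb: "\<forall>x\<in>AA. 0 \<le> w x \<and> w x \<le> 1"
  proof
    fix x assume x: "x \<in> AA"
    have h1: "1 - exp (-1) \<le> x" "x < 1" using AA_bounds[OF x] by auto
    have h0: "0 < 1 - exp (-1::real)" by simp
    have "\<bar>1 - x\<bar> \<le> 1" using h0 h1 by linarith
    then show "0 \<le> w x \<and> w x \<le> 1" unfolding w_def using b by (auto intro: powr_le1)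
  qed
  have ohw: "omega_hat (weight_power nu \<beta>) r = (LINT x:{r..<1}|lborel. nu x * w x)" for r
    by (simp add: omega_hat_def weight_power_def w_def)
  have l2: "0 < ln (2::real)" "ln (2::real) \<le> 1" using ln_le_minus_one[of 2] by auto
  obtain j where j: "C / (\<beta>^2 * ln 2) < (4::real)^j"
    using real_arch_pow[of 4 "C / (\<beta>^2 * ln 2)"] by auto
  define a where "a = (4::real)^j"
  have a1: "1 \<le> a" unfolding a_def by simp
  have ea: "exp (-a) \<le> 1/2"
    using exp_m1 a1 by (meson exp_le_cancel_iff neg_le_iff_le order_trans)
  have ea0: "0 < exp (-a)" by simp
  have e2a: "exp (-2*a) = exp (-a) * exp (-a)" by (simp flip: exp_add)
  define r where "r = 1 - 2 * exp (-2*a)"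
  define q where "q = 1 - exp (-2*a)"
  define p' where "p' = 1 - exp (-(4*a))"
  have r01: "0 < r" "r < 1" unfolding r_def e2a
  proof -
    have "2 * (exp (-a) * exp (-a)) \<le> 2 * (1/2 * (1/2))" using ea ea0
      by (intro mult_left_mono mult_mono) auto
    then show "0 < 1 - 2 * (exp (-a) * exp (-a))" by simp
  qed simp
  have hq: "(1 + r) / 2 = q" unfolding r_def q_def by simp
  have rq: "r < q" unfolding r_def q_def by simp
  have q1: "q < 1" unfolding q_def by simp
  have sub: "{r<..<q} \<subseteq> AA"
  proof -
    have "1 - exp (-a) \<le> r" unfolding r_def e2a
    proof -
      have "2 * (exp (-a) * exp (-a)) \<le> 1 * exp (-a)" using ea ea0
        by (simp add: mult.assoc[symmetric])
      then show "1 - exp (-a) \<le> 1 - 2 * (exp (-a) * exp (-a))" by simp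
    qed
    then have "{r<..<q} \<subseteq> {1 - exp (-((4::real)^j)) <..< 1 - exp (-(2*(4::real)^j))}"
      unfolding q_def a_def by auto
    then show ?thesis using blk_sub by blast
  qed
  define c where "c = exp (-2*a) powr \<beta>"
  define c' where "c' = exp (-(4*a)) powr \<beta>"
  have c0: "0 \<le> c" "0 \<le> c'" unfolding c_def c'_def by auto
  have low: "c * (G q - G r) \<le> (LINT x:{r..<1}|lborel. nu x * w x)"
  proof (rule LB[OF r01(1) rq q1 sub order_refl c0(1) _ wb wm], intro ballI)
    fix x assume "x \<in> {r<..<q}"
    then have "exp (-2*a) \<le> 1 - x" unfolding q_def by auto
    then show "c \<le> w x" unfolding c_def w_def using b by (intro powr_mono2) auto
  qed
  have up: "(LINT x:{q..<1}|lborel. nu x * w x) \<le> c' * (- G p')"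
  proof (rule UB[OF _ _ _ c0(2) wb wm])
    show "0 < p'" "p' < 1" unfolding p'_def using a1 by auto
    show "\<forall>x. x \<in> AA \<and> q \<le> x \<and> x < 1 \<longrightarrow> p' \<le> x \<and> w x \<le> c'"
    proof (intro allI impI)
      fix x assume x: "x \<in> AA \<and> q \<le> x \<and> x < 1"
      then obtain i where i: "x \<in> blk i" unfolding AA_def by blast
      have "j < i"
      proof (rule ccontr)
        assume "\<not> j < i"
        then have "(4::real)^i \<le> a" unfolding a_def by (intro power_increasing) auto
        then have "1 - exp (-(2*(4::real)^i)) \<le> q" unfolding q_def by simp
        then show False using i x unfolding blk_def by auto
      qed
      then have "(4::real)^(Suc j) \<le> 4^i" by (intro power_increasing) auto
      then have "4 * a \<le> 4^i" unfolding a_def by simp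
      then have e4: "1 - exp (-(4*a)) \<le> 1 - exp (-((4::real)^i))" by simp
      have "1 - exp (-((4::real)^i)) \<le> x" using i unfolding blk_def by auto
      then have px: "p' \<le> x" using e4 unfolding p'_def by linarith
      moreover have "w x \<le> c'" unfolding w_def c'_def using b px x unfolding p'_def
        by (intro powr_mono2) auto
      ultimately show "p' \<le> x \<and> w x \<le> c'" by simp
    qed
  qed
  have Gq: "G q = - 1 / (2*a)" unfolding q_def using a1 G_exp[of "2*a"] by simp
  have Gr: "G r = 1 / (ln 2 - 2*a)" unfolding r_def G_def by (simp add: ln_mult)
  have Gp: "- G p' = 1 / (4*a)" unfolding p'_def using a1 G_exp[of "4*a"] by simp
  have GqGr: "ln 2 / (4 * a^2) \<le> G q - G r"
  proof -
    have d: "0 < 2*a - ln 2" using l2 a1 by simp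
    have "G q - G r = ln 2 / (2*a*(2*a - ln 2))" unfolding Gq Gr using d a1
      by (simp add: field_simps)
    also have "ln 2 / (4 * a^2) \<le> \<dots>" using d a1 l2
      by (intro divide_left_mono) (auto simp: power2_eq_square)
    ultimately show ?thesis by simp
  qed
  define t where "t = exp (2*a*\<beta>)"
  have t0: "0 < t" unfolding t_def by simp
  have ct: "c = 1 / t"
  proof -
    have "c = exp (-2*a*\<beta>)" unfolding c_def by (rule exp_powr_real)
    also have "\<dots> = 1 / t" unfolding t_def by (simp add: exp_minus inverse_eq_divide)
    finally show ?thesis .
  qed
  have tt: "t^2 = exp (4*a*\<beta>)"
  proof -
    have "t^2 = exp (2*a*\<beta> + 2*a*\<beta>)" unfolding t_def power2_eq_square exp_add ..
    also have "2*a*\<beta> + 2*a*\<beta> = 4*a*\<beta>" by simp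
    finally show ?thesis .
  qed
  have ct': "c' = 1 / t^2"
  proof -
    have "c' = exp (-(4*a)*\<beta>)" unfolding c'_def by (rule exp_powr_real)
    also have "\<dots> = 1 / t^2" unfolding tt by (simp add: exp_minus inverse_eq_divide)
    finally show ?thesis .
  qed
  have "c * (ln 2 / (4 * a^2)) \<le> c * (G q - G r)" using GqGr c0 by (intro mult_left_mono)
  also have "\<dots> \<le> omega_hat (weight_power nu \<beta>) r" using low ohw by simp
  also have "\<dots> \<le> C * omega_hat (weight_power nu \<beta>) q" using C(2) r01 hq by force
  also have "\<dots> \<le> C * (c' * (1 / (4*a)))" using up ohw Gp C(1) by (intro mult_left_mono) auto
  finally have ineq: "(1/t) * (ln 2 / (4 * a^2)) \<le> C * ((1/t^2) * (1 / (4*a)))" unfolding ct ct' .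
  then have "t * ln 2 \<le> C * a" using t0 a1 by (simp add: field_simps power2_eq_square)
  moreover have tb: "2 * a^2 * \<beta>^2 < t"
  proof -
    have h1: "1 + 2*a*\<beta> + (2*a*\<beta>)^2/2 \<le> t" unfolding t_def using a1 b
      by (intro exp_lower_Taylor_quadratic) simp
    have h2: "0 < 2*a*\<beta>" using a1 b by simp
    have h3: "(2*a*\<beta>)^2/2 = 2 * a^2 * \<beta>^2" by (simp add: power_mult_distrib)
    show ?thesis using h1 h2 h3 by linarith
  qed
  ultimately have "2 * a^2 * \<beta>^2 * ln 2 < C * a"
  proof -
    assume A: "t * ln 2 \<le> C * a" and B: "2 * a^2 * \<beta>^2 < t"
    have "2 * a^2 * \<beta>^2 * ln 2 < t * ln 2" using B l2(1) by (rule mult_strict_right_mono)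
    then show ?thesis using A by linarith
  qed
  then have "a * (2 * a * \<beta>^2 * ln 2) < a * C" by (simp add: power2_eq_square mult_ac)
  then have k1: "2 * a * \<beta>^2 * ln 2 < C" using a1 by (simp add: mult_less_cancel_left_pos)
  have k2: "C < a * (\<beta>^2 * ln 2)" using j l2 b unfolding a_def by (simp add: field_simps)
  have k3: "0 < a * (\<beta>^2 * ln 2)" using a1 l2 b by simp
  show False using k1 k2 k3 by (simp add: mult_ac) 
qed

theorem proposition10:
  fixes \<beta> :: real
  assumes "\<beta> > 0"
  shows "\<exists>\<nu>. radial_weight \<nu> \<and> \<nu> \<in> D_hat \<and> weight_power \<nu> \<beta> \<notin> D_hat"
  using nu_D W_notin[OF assms] by blast

end
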